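(* Let $G\leq\operatorname{Homeo}(\mathfrak{C})$ be approximately full. Then $G$ is flexible if and only if $G$ is vigorous.
   Context: $\mathfrak{C}$ denotes a Cantor space (a space homeomorphic to $\{0,1\}^\omega$). Groups of homeomorphisms act on the right. $K_{\mathfrak{C}}$ denotes the set of non-empty proper clopen subsets of $\mathfrak{C}$. For $\gamma\in\operatorname{Homeo}(\mathfrak{C})$, $\operatorname{supp}(\gamma)=\{p\in\mathfrak{C}: p\gamma\neq p\}$. A subset $S\subseteq \operatorname{Homeo}(\mathfrak{C})$ is vigorous if for all clopen $A,B,C\subseteq\mathfrak{C}$ with $B,C$ non-empty proper subsets of $A$ there is $\gamma\in S$ with $\operatorname{supp}(\gamma)\subseteq A$ and $B\gamma\subseteq C$. $G$ is flexible if for all $U,V\in K_{\mathfrak{C}}$ there is $\gamma\in G$ with $U\gamma\subseteq V$. $G$ is approximately full if whenever $\Gamma\subseteq G$ is finite, $\{D_\gamma\}_{\gamma\in\Gamma}$ is a partition of $\mathfrak{C}$ into clopen sets such that $\{D_\gamma\gamma\}_{\gamma\in\Gamma}$ is also a partition of $\mathfrak{C}$, and $\delta\in\Gamma$, there exists $\chi\in G$ with $\chi|_{D_\gamma}=\gamma|_{D_\gamma}$ for every $\gamma\in\Gamma\setminus\{\delta\}$. *)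

theory Defs
  imports "HOL-Analysis.Analysis"
begin

definition cantor_top :: "(nat \<Rightarrow> bool) topology" where
  "cantor_top = product_topology (\<lambda>_. discrete_topology (UNIV :: bool set)) UNIV"

definition cantor_clopen :: "(nat \<Rightarrow> bool) set \<Rightarrow> bool" where
  "cantor_clopen A \<longleftrightarrow> openin cantor_top A \<and> closedin cantor_top A"

definition K_C :: "(nat \<Rightarrow> bool) set set" where
  "K_C = {A. cantor_clopen A \<and> A \<noteq> {} \<and> A \<noteq> topspace cantor_top}"

definition Homeo_C :: "((nat \<Rightarrow> bool) \<Rightarrow> (nat \<Rightarrow> bool)) set" where
  "Homeo_C = {f. homeomorphic_map cantor_top cantor_top f}"

definition homeo_subgroup :: "((nat \<Rightarrow> bool) \<Rightarrow> (nat \<Rightarrow> bool)) set \<Rightarrow> bool" where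
  "homeo_subgroup G \<longleftrightarrow> G \<subseteq> Homeo_C \<and> id \<in> G \<and>
     (\<forall>f\<in>G. \<forall>g\<in>G. f \<circ> g \<in> G) \<and> (\<forall>f\<in>G. inv f \<in> G)"

definition supp :: "((nat \<Rightarrow> bool) \<Rightarrow> (nat \<Rightarrow> bool)) \<Rightarrow> (nat \<Rightarrow> bool) set" where
  "supp g = {p \<in> topspace cantor_top. g p \<noteq> p}"

definition vigorous :: "((nat \<Rightarrow> bool) \<Rightarrow> (nat \<Rightarrow> bool)) set \<Rightarrow> bool" where
  "vigorous S \<longleftrightarrow> (\<forall>A B C. cantor_clopen A \<and> cantor_clopen B \<and> cantor_clopen C \<and>
      B \<noteq> {} \<and> B \<subset> A \<and> C \<noteq> {} \<and> C \<subset> A \<longrightarrow>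
      (\<exists>g\<in>S. supp g \<subseteq> A \<and> g ` B \<subseteq> C))"

definition flexible :: "((nat \<Rightarrow> bool) \<Rightarrow> (nat \<Rightarrow> bool)) set \<Rightarrow> bool" where
  "flexible G \<longleftrightarrow> (\<forall>U\<in>K_C. \<forall>V\<in>K_C. \<exists>g\<in>G. g ` U \<subseteq> V)"

definition clopen_partition :: "'i set \<Rightarrow> ('i \<Rightarrow> (nat \<Rightarrow> bool) set) \<Rightarrow> bool" where
  "clopen_partition I D \<longleftrightarrow> (\<forall>i\<in>I. cantor_clopen (D i) \<and> D i \<noteq> {}) \<and>
     (\<forall>i\<in>I. \<forall>j\<in>I. i \<noteq> j \<longrightarrow> D i \<inter> D j = {}) \<and>
     (\<Union>i\<in>I. D i) = topspace cantor_top"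

definition approximately_full :: "((nat \<Rightarrow> bool) \<Rightarrow> (nat \<Rightarrow> bool)) set \<Rightarrow> bool" where
  "approximately_full G \<longleftrightarrow> (\<forall>\<Gamma> D \<delta>. finite \<Gamma> \<and> \<Gamma> \<subseteq> G \<and>
      clopen_partition \<Gamma> D \<and> clopen_partition \<Gamma> (\<lambda>g. g ` D g) \<and> \<delta> \<in> \<Gamma> \<longrightarrow>
      (\<exists>h\<in>G. \<forall>g\<in>\<Gamma> - {\<delta>}. \<forall>p\<in>D g. h p = g p))"

end

theory Submission
  imports Defs
begin

lemma top_C: "topspace cantor_top = UNIV"
  by (simp add: cantor_top_def topspace_product_topology)

lemma clopen_UNIV: "cantor_clopen UNIV"
  unfolding cantor_clopen_def by (metis top_C openin_topspace closedin_topspace)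

lemma clopen_Un: "cantor_clopen A \<Longrightarrow> cantor_clopen B \<Longrightarrow> cantor_clopen (A \<union> B)"
  unfolding cantor_clopen_def by auto

lemma clopen_Int: "cantor_clopen A \<Longrightarrow> cantor_clopen B \<Longrightarrow> cantor_clopen (A \<inter> B)"
  unfolding cantor_clopen_def by auto

lemma clopen_Diff: "cantor_clopen A \<Longrightarrow> cantor_clopen B \<Longrightarrow> cantor_clopen (A - B)"
  unfolding cantor_clopen_def by (auto intro: openin_diff closedin_diff)

lemma clopen_Compl: "cantor_clopen B \<Longrightarrow> cantor_clopen (- B)"
  using clopen_Diff[OF clopen_UNIV] by (simp add: Compl_eq_Diff_UNIV)

lemma clopen_image: "f \<in> Homeo_C \<Longrightarrow> cantor_clopen A \<Longrightarrow> cantor_clopen (f ` A)"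
proof -
  assume f: "f \<in> Homeo_C" and A: "cantor_clopen A"
  have hm: "homeomorphic_map cantor_top cantor_top f" using f by (simp add: Homeo_C_def)
  have sub: "A \<subseteq> topspace cantor_top" by (simp add: top_C)
  show ?thesis using A homeomorphic_map_openness[OF hm sub] homeomorphic_map_closedness[OF hm sub]
    unfolding cantor_clopen_def by simp
qed

lemma homeo_bij: "f \<in> Homeo_C \<Longrightarrow> bij f"
proof -
  assume f: "f \<in> Homeo_C"
  have hm: "homeomorphic_map cantor_top cantor_top f" using f by (simp add: Homeo_C_def)
  have "inj_on f UNIV" using homeomorphic_imp_injective_map[OF hm] by (simp only: top_C)
  moreover have "f ` UNIV = UNIV" using homeomorphic_imp_surjective_map[OF hm] by (simp only: top_C)
  ultimately show ?thesis by (simp add: bij_def)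
qed

lemma partition3:
  assumes d: "a \<noteq> b" "a \<noteq> c" "b \<noteq> c"
    and cl: "cantor_clopen X" "cantor_clopen Y" "cantor_clopen Z"
    and ne: "X \<noteq> {}" "Y \<noteq> {}" "Z \<noteq> {}"
    and dj: "X \<inter> Y = {}" "X \<inter> Z = {}" "Y \<inter> Z = {}"
    and un: "X \<union> Y \<union> Z = UNIV"
    and F: "F a = X" "F b = Y" "F c = Z"
  shows "clopen_partition {a, b, c} F"
  unfolding clopen_partition_def top_C
proof (intro conjI)
  show "\<forall>i\<in>{a, b, c}. cantor_clopen (F i) \<and> F i \<noteq> {}" using cl ne F by blast
  show "\<forall>i\<in>{a, b, c}. \<forall>j\<in>{a, b, c}. i \<noteq> j \<longrightarrow> F i \<inter> F j = {}"
    using dj F by (auto simp: Int_commute)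
  show "(\<Union>i\<in>{a, b, c}. F i) = UNIV" using un F by auto
qed

lemma move_lemma:
  assumes G: "homeo_subgroup G" and AF: "approximately_full G" and FL: "flexible G"
    and A: "cantor_clopen A" "A \<noteq> UNIV"
    and B: "cantor_clopen B" "B \<noteq> {}" "B \<subseteq> A"
    and T: "cantor_clopen T" "T \<noteq> {}" "T \<subseteq> A"
    and disj: "B \<inter> T = {}"
  shows "\<exists>h\<in>G. supp h \<subseteq> A \<and> h ` B \<subseteq> T"
proof -
  have U: "B \<union> T \<in> K_C" using A B T clopen_Un by (auto simp: K_C_def top_C)
  have V: "T \<in> K_C" using A T by (auto simp: K_C_def top_C)
  obtain \<rho> where \<rho>G: "\<rho> \<in> G" and \<rho>U: "\<rho> ` (B \<union> T) \<subseteq> T"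
    using FL U V unfolding flexible_def by blast
  have \<rho>H: "\<rho> \<in> Homeo_C" using G \<rho>G by (auto simp: homeo_subgroup_def)
  have bij: "bij \<rho>" using homeo_bij[OF \<rho>H] .
  define \<sigma> where "\<sigma> = inv \<rho>"
  have \<sigma>G: "\<sigma> \<in> G" using G \<rho>G by (auto simp: homeo_subgroup_def \<sigma>_def)
  have \<sigma>\<rho>: "\<And>x. \<sigma> (\<rho> x) = x" using bij by (simp add: \<sigma>_def bij_is_inj)
  obtain b where b: "b \<in> B" using B by blast
  have \<rho>b: "\<rho> b \<in> T" "b \<notin> T" using \<rho>U b disj by auto
  have \<rho>\<rho>b: "\<rho> (\<rho> b) \<in> T" using \<rho>U \<rho>b by auto
  have d1: "\<rho> \<noteq> id" using \<rho>b by auto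
  have d2: "\<sigma> \<noteq> id" using \<rho>b \<sigma>\<rho>[of b] by (metis id_apply)
  have d3: "\<rho> \<noteq> \<sigma>" using \<rho>\<rho>b \<rho>b \<sigma>\<rho>[of b] by metis
  define D where "D g = (if g = id then - (B \<union> \<rho> ` B) else if g = \<rho> then B else \<rho> ` B)" for g
  have Did: "D id = - (B \<union> \<rho> ` B)" by (simp add: D_def)
  have D\<rho>: "D \<rho> = B" using d1 by (simp add: D_def)
  have D\<sigma>: "D \<sigma> = \<rho> ` B" using d2 d3 by (simp add: D_def)
  have I\<sigma>: "\<sigma> ` (\<rho> ` B) = B" using \<sigma>\<rho> by (simp add: image_image)
  have \<rho>BT: "\<rho> ` B \<subseteq> T" using \<rho>U by auto
  have disj2: "B \<inter> \<rho> ` B = {}" using \<rho>BT disj by auto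
  have cl1: "cantor_clopen (- (B \<union> \<rho> ` B))" using clopen_Compl clopen_Un B clopen_image[OF \<rho>H] by blast
  have cl2: "cantor_clopen (\<rho> ` B)" using clopen_image[OF \<rho>H] B by blast
  have ne1: "- (B \<union> \<rho> ` B) \<noteq> {}"
  proof -
    obtain x where "x \<notin> A" using A(2) by blast
    then have "x \<in> - (B \<union> \<rho> ` B)" using B \<rho>BT T by blast
    then show ?thesis by blast
  qed
  have ne2: "\<rho> ` B \<noteq> {}" using B by auto
  let ?\<Gamma> = "{id, \<rho>, \<sigma>}"
  have int1: "- (B \<union> \<rho> ` B) \<inter> B = {}" "B \<inter> - (B \<union> \<rho> ` B) = {}"
    "- (B \<union> \<rho> ` B) \<inter> \<rho> ` B = {}" "\<rho> ` B \<inter> - (B \<union> \<rho> ` B) = {}"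
    "\<rho> ` B \<inter> B = {}" using disj2 by blast+
  have un: "- (B \<union> \<rho> ` B) \<union> (B \<union> \<rho> ` B) = UNIV" "- (B \<union> \<rho> ` B) \<union> (\<rho> ` B \<union> B) = UNIV" by blast+
  have P1: "clopen_partition ?\<Gamma> D"
    apply (rule partition3[where X="- (B \<union> \<rho> ` B)" and Y=B and Z="\<rho> ` B"])
    apply (rule d1[symmetric])
    apply (rule d2[symmetric])
    apply (rule d3)
    apply (rule cl1)
    apply (rule B(1))
    apply (rule cl2)
    apply (rule ne1)
    apply (rule B(2))
    apply (rule ne2)
    apply blast
    apply blast
    apply (rule disj2)
    apply blast
    apply (rule Did)
    apply (rule D\<rho>)
    apply (rule D\<sigma>)
    done
  have P2: "clopen_partition ?\<Gamma> (\<lambda>g. g ` D g)"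
    apply (rule partition3[where X="- (B \<union> \<rho> ` B)" and Y="\<rho> ` B" and Z=B])
    apply (rule d1[symmetric])
    apply (rule d2[symmetric])
    apply (rule d3)
    apply (rule cl1)
    apply (rule cl2)
    apply (rule B(1))
    apply (rule ne1)
    apply (rule ne2)
    apply (rule B(2))
    apply blast
    apply blast
    using disj2 apply blast
    apply blast
    apply (simp only: Did image_id id_apply)
    apply (simp only: D\<rho>)
    apply (simp only: D\<sigma> I\<sigma>)
    done
  have fin: "finite ?\<Gamma>" and sub: "?\<Gamma> \<subseteq> G" using \<rho>G \<sigma>G G by (auto simp: homeo_subgroup_def)
  have "\<exists>h\<in>G. \<forall>g\<in>?\<Gamma> - {\<sigma>}. \<forall>p\<in>D g. h p = g p"
  proof -
    have c: "finite ?\<Gamma> \<and> ?\<Gamma> \<subseteq> G \<and> clopen_partition ?\<Gamma> D \<and> clopen_partition ?\<Gamma> (\<lambda>g. g ` D g) \<and> \<sigma> \<in> ?\<Gamma>"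
      by (intro conjI fin sub P1 P2) simp
    have "\<forall>\<Gamma> D \<delta>. finite \<Gamma> \<and> \<Gamma> \<subseteq> G \<and>
      clopen_partition \<Gamma> D \<and> clopen_partition \<Gamma> (\<lambda>g. g ` D g) \<and> \<delta> \<in> \<Gamma> \<longrightarrow>
      (\<exists>h\<in>G. \<forall>g\<in>\<Gamma> - {\<delta>}. \<forall>p\<in>D g. h p = g p)"
      using AF by (simp only: approximately_full_def)
    then show ?thesis using c by (elim allE impE) 
  qed
  then obtain h where hG: "h \<in> G" and hD: "\<forall>g\<in>?\<Gamma> - {\<sigma>}. \<forall>p\<in>D g. h p = g p"
    by blast
  have m1: "id \<in> ?\<Gamma> - {\<sigma>}" using d2 by blast
  have m2: "\<rho> \<in> ?\<Gamma> - {\<sigma>}" using d3 by blast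
  have h1: "h p = p" if "p \<notin> B \<union> \<rho> ` B" for p
  proof -
    have "p \<in> D id" using that Did by blast
    then have "h p = id p" using hD m1 by blast
    then show ?thesis by simp
  qed
  have h2: "h p = \<rho> p" if "p \<in> B" for p
  proof -
    have "p \<in> D \<rho>" using that D\<rho> by blast
    then show "h p = \<rho> p" using hD m2 by blast
  qed
  have "supp h \<subseteq> A"
  proof
    fix p assume "p \<in> supp h"
    then have "h p \<noteq> p" by (simp add: supp_def)
    then have "p \<in> B \<union> \<rho> ` B" using h1 by blast
    then show "p \<in> A" using B \<rho>BT T by auto
  qed
  moreover have "h ` B \<subseteq> T" using h2 \<rho>BT by auto
  ultimately show ?thesis using hG by blast
qed

lemma supp_comp: "supp (f \<circ> g) \<subseteq> supp f \<union> supp g"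
  unfolding supp_def by auto

theorem lemma2p14:
  assumes "homeo_subgroup G" and "approximately_full G"
  shows "flexible G \<longleftrightarrow> vigorous G"
proof
  assume V: "vigorous G"
  show "flexible G" unfolding flexible_def
  proof (intro ballI)
    fix U W assume UW: "U \<in> K_C" "W \<in> K_C"
    have "\<exists>g\<in>G. supp g \<subseteq> UNIV \<and> g ` U \<subseteq> W"
      using V[unfolded vigorous_def, rule_format, of UNIV U W] UW clopen_UNIV
      unfolding K_C_def top_C by blast
    then show "\<exists>g\<in>G. g ` U \<subseteq> W" by blast
  qed
next
  assume FL: "flexible G"
  show "vigorous G" unfolding vigorous_def
  proof (intro allI impI)
    fix A B C
    assume H: "cantor_clopen A \<and> cantor_clopen B \<and> cantor_clopen C \<and>
      B \<noteq> {} \<and> B \<subset> A \<and> C \<noteq> {} \<and> C \<subset> A"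
    show "\<exists>g\<in>G. supp g \<subseteq> A \<and> g ` B \<subseteq> C"
    proof (cases "A = UNIV")
      case True
      have "B \<in> K_C" "C \<in> K_C" using H True by (auto simp: K_C_def top_C)
      then show ?thesis using FL True unfolding flexible_def by blast
    next
      case False
      show ?thesis
      proof (cases "C - B = {}")
        case False
        have "cantor_clopen (C - B)" using H clopen_Diff by blast
        then obtain h where "h \<in> G" "supp h \<subseteq> A" "h ` B \<subseteq> C - B"
          using move_lemma[OF assms FL, of A B "C - B"] H \<open>A \<noteq> UNIV\<close> False by blast
        then show ?thesis by blast
      next
        case True
        have W: "cantor_clopen (A - B)" "A - B \<noteq> {}" using H clopen_Diff by auto
        obtain h1 where h1: "h1 \<in> G" "supp h1 \<subseteq> A" "h1 ` B \<subseteq> A - B"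
          using move_lemma[OF assms FL, of A B "A - B"] H \<open>A \<noteq> UNIV\<close> W by blast
        obtain h2 where h2: "h2 \<in> G" "supp h2 \<subseteq> A" "h2 ` (A - B) \<subseteq> C"
          using move_lemma[OF assms FL, of A "A - B" C] H \<open>A \<noteq> UNIV\<close> W True by blast
        have "h2 \<circ> h1 \<in> G" using assms(1) h1 h2 by (auto simp: homeo_subgroup_def)
        moreover have "supp (h2 \<circ> h1) \<subseteq> A" using supp_comp h1 h2 by blast
        moreover have "(h2 \<circ> h1) ` B \<subseteq> C" using h1 h2 by (auto simp: image_subset_iff)
        ultimately show ?thesis by blast
      qed
    qed
  qed
qed

end
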